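(* Let $\kappa$ be an uncountable cardinal with $\kappa^{<\kappa}=\kappa$, let $\tau$ be a relational signature of size $\leq\kappa$ with finite arities, let $G$ be a closed $\kappa$-Baire subgroup of $S_\kappa$, and let $\mathcal{F}=\{\{g(a):g\in G\}:a\in\kappa^{<\kappa}\}$ be the family of $G$-orbits of elements of $\kappa^{<\kappa}$. Then a subset of $X_\tau$ is $\kappa$-Borel and $G$-invariant if and only if it is definable in $\mathscr{L}_{\kappa^+\kappa}(\mathcal{F})$.
   Context: For a set $I$ of size $\kappa$, $2^I$ has basic open sets $U(s)=\{f\in2^I:s\subseteq f\}$ for partial functions $s$ of size $<\kappa$. The logic space is $X_\tau=\prod_{R\in\tau}2^{\kappa^{a(R)}}$ with the product of these topologies; its elements are $\tau$-structures with universe $\kappa$. $S_\kappa$ is the group of permutations of $\kappa$ with the subspace topology from $\kappa^\kappa$ (basic open sets determined by restrictions to subsets of size $<\kappa$); permutations act coordinatewise on tuples (including sequences in $\kappa^{<\kappa}$), on relations by images, and on $X_\tau$ by $R^{g(M)}=g(R^M)$. A set $A\subseteq X_\tau$ is $G$-invariant if $g(A)=A$ for all $g\in G$. The $\kappa$-Borel sets are generated from the basic open sets by unions and intersections of length $\kappa$ and complements. A subspace is $\kappa$-Baire if $\bigcap_{\alpha<\kappa}U_\alpha$ is dense in it for every sequence $\langle U_\alpha:\alpha<\kappa\rangle$ of open dense subsets of it. $\mathscr{L}_{\kappa^+\kappa}(\mathcal{F})$ is the infinitary logic with conjunctions and disjunctions of size $\leq\kappa$ and quantification over strings of fewer than $\kappa$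 variables, in signature $\tau$ plus a symbol for each orbit in $\mathcal{F}$ (a relation of arity $<\kappa$) interpreted as that fixed relation on $\kappa$. A set $A\subseteq X_\tau$ is definable if some sentence $\varphi$ satisfies $M\in A\iff M\models\varphi$ for all $M\in X_\tau$. *)

theory Defs
  imports Main
begin

text \<open>The cardinal kappa is represented by a type 'k carrying a cardinal
well-order kr (card_order kr); ordinals below kappa are the proper initial
segments underS kr alpha.  The signature tau is a type 's of relation symbols
with arity function ar :: 's => nat.\<close>

definition small :: "'k rel \<Rightarrow> 'a set \<Rightarrow> bool" where
  "small kr A \<longleftrightarrow> (card_of A, kr) \<in> ordLess"

text \<open>kappa^{<kappa}: partial maps whose domain is an ordinal below kappa.\<close>
definition kseqs :: "'k rel \<Rightarrow> ('k \<rightharpoonup> 'a) set" where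
  "kseqs kr = {a. \<exists>\<alpha>. dom a = underS kr \<alpha>}"

definition perms :: "('k \<Rightarrow> 'k) set" where
  "perms = {g. bij g}"

definition nbhd :: "('k \<Rightarrow> 'k) \<Rightarrow> 'k set \<Rightarrow> ('k \<Rightarrow> 'k) set" where
  "nbhd g A = {h \<in> perms. \<forall>x\<in>A. h x = g x}"

definition Sk_open :: "'k rel \<Rightarrow> ('k \<Rightarrow> 'k) set \<Rightarrow> bool" where
  "Sk_open kr W \<longleftrightarrow> W \<subseteq> perms \<and> (\<forall>g\<in>W. \<exists>A. small kr A \<and> nbhd g A \<subseteq> W)"

definition subgroup_Sk :: "('k \<Rightarrow> 'k) set \<Rightarrow> bool" where
  "subgroup_Sk G \<longleftrightarrow> G \<subseteq> perms \<and> id \<in> G \<and> (\<forall>g\<in>G. \<forall>h\<in>G. g \<circ> h \<in> G)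
     \<and> (\<forall>g\<in>G. inv g \<in> G)"

definition closed_Sk :: "'k rel \<Rightarrow> ('k \<Rightarrow> 'k) set \<Rightarrow> bool" where
  "closed_Sk kr G \<longleftrightarrow> G \<subseteq> perms \<and> Sk_open kr (perms - G)"

definition rel_open :: "'k rel \<Rightarrow> ('k \<Rightarrow> 'k) set \<Rightarrow> ('k \<Rightarrow> 'k) set \<Rightarrow> bool" where
  "rel_open kr G U \<longleftrightarrow> (\<exists>W. Sk_open kr W \<and> U = G \<inter> W)"

definition rel_dense :: "'k rel \<Rightarrow> ('k \<Rightarrow> 'k) set \<Rightarrow> ('k \<Rightarrow> 'k) set \<Rightarrow> bool" where
  "rel_dense kr G D \<longleftrightarrow> D \<subseteq> G \<and> (\<forall>V. rel_open kr G V \<and> V \<noteq> {} \<longrightarrow> V \<inter> D \<noteq> {})"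

definition kappa_Baire :: "'k rel \<Rightarrow> ('k \<Rightarrow> 'k) set \<Rightarrow> bool" where
  "kappa_Baire kr G \<longleftrightarrow>
     (\<forall>U :: 'k \<Rightarrow> ('k \<Rightarrow> 'k) set.
        (\<forall>i. rel_open kr G (U i) \<and> rel_dense kr G (U i)) \<longrightarrow> rel_dense kr G (\<Inter>i. U i))"

type_synonym ('s, 'k) tstruct = "'s \<Rightarrow> 'k list \<Rightarrow> bool"

definition Xtau :: "('s \<Rightarrow> nat) \<Rightarrow> ('s, 'k) tstruct set" where
  "Xtau ar = {M. \<forall>R xs. M R xs \<longrightarrow> length xs = ar R}"

definition basic_open :: "('s \<Rightarrow> nat) \<Rightarrow> ('s \<times> 'k list \<rightharpoonup> bool) \<Rightarrow> ('s, 'k) tstruct set" where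
  "basic_open ar s = {M \<in> Xtau ar. \<forall>R xs b. s (R, xs) = Some b \<longrightarrow> M R xs = b}"

definition is_basic_cond :: "'k rel \<Rightarrow> ('s \<Rightarrow> nat) \<Rightarrow> ('s \<times> 'k list \<rightharpoonup> bool) \<Rightarrow> bool" where
  "is_basic_cond kr ar s \<longleftrightarrow> small kr (dom s) \<and> (\<forall>R xs. (R, xs) \<in> dom s \<longrightarrow> length xs = ar R)"

inductive_set kBorel :: "'k rel \<Rightarrow> ('s \<Rightarrow> nat) \<Rightarrow> ('s, 'k) tstruct set set"
  for kr :: "'k rel" and ar :: "'s \<Rightarrow> nat" where
  basic: "is_basic_cond kr ar s \<Longrightarrow> basic_open ar s \<in> kBorel kr ar"
| compl: "A \<in> kBorel kr ar \<Longrightarrow> Xtau ar - A \<in> kBorel kr ar"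
| union: "(\<And>i. F i \<in> kBorel kr ar) \<Longrightarrow> (\<Union>i. F (i :: 'k)) \<in> kBorel kr ar"
| inter: "(\<And>i. F i \<in> kBorel kr ar) \<Longrightarrow> Xtau ar \<inter> (\<Inter>i. F (i :: 'k)) \<in> kBorel kr ar"

definition act :: "('k \<Rightarrow> 'k) \<Rightarrow> ('s, 'k) tstruct \<Rightarrow> ('s, 'k) tstruct" where
  "act g M = (\<lambda>R ys. \<exists>xs. M R xs \<and> ys = map g xs)"

definition invariant :: "('k \<Rightarrow> 'k) set \<Rightarrow> ('s, 'k) tstruct set \<Rightarrow> bool" where
  "invariant G A \<longleftrightarrow> (\<forall>g\<in>G. act g ` A = A)"

definition orbits :: "'k rel \<Rightarrow> ('k \<Rightarrow> 'k) set \<Rightarrow> ('k \<rightharpoonup> 'k) set set" where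
  "orbits kr G = {{map_option g \<circ> a | g. g \<in> G} | a. a \<in> kseqs kr}"

text \<open>Variables are elements of 'k (kappa many); orbit symbols are labelled by the
orbits themselves.  Conjunctions are indexed by 'k (size at most kappa, repetitions
allowed); quantifiers bind a set of fewer than kappa variables.\<close>
datatype ('s, 'k, 'v) fm =
    Rel 's "'v list"
  | Eq 'v 'v
  | Orb "('k \<rightharpoonup> 'k) set" "'k \<rightharpoonup> 'v"
  | Neg "('s, 'k, 'v) fm"
  | Conj "'k \<Rightarrow> ('s, 'k, 'v) fm"
  | Ex "'v set" "('s, 'k, 'v) fm"

primrec sat :: "('s, 'k) tstruct \<Rightarrow> ('v \<Rightarrow> 'k) \<Rightarrow> ('s, 'k, 'v) fm \<Rightarrow> bool" where
  "sat M e (Rel R xs) = M R (map e xs)"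
| "sat M e (Eq x y) = (e x = e y)"
| "sat M e (Orb Q s) = (map_option e \<circ> s \<in> Q)"
| "sat M e (Neg \<phi>) = (\<not> sat M e \<phi>)"
| "sat M e (Conj \<Phi>) = (\<forall>i. sat M e (\<Phi> i))"
| "sat M e (Ex V \<phi>) = (\<exists>e'. (\<forall>v. v \<notin> V \<longrightarrow> e' v = e v) \<and> sat M e' \<phi>)"

primrec fv :: "('s, 'k, 'v) fm \<Rightarrow> 'v set" where
  "fv (Rel R xs) = set xs"
| "fv (Eq x y) = {x, y}"
| "fv (Orb Q s) = ran s"
| "fv (Neg \<phi>) = fv \<phi>"
| "fv (Conj \<Phi>) = (\<Union>i. fv (\<Phi> i))"
| "fv (Ex V \<phi>) = fv \<phi> - V"

primrec wf :: "'k rel \<Rightarrow> ('s \<Rightarrow> nat) \<Rightarrow> ('k \<rightharpoonup> 'k) set set \<Rightarrow> ('s, 'k, 'v) fm \<Rightarrow> bool" where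
  "wf kr ar F (Rel R xs) = (length xs = ar R)"
| "wf kr ar F (Eq x y) = True"
| "wf kr ar F (Orb Q s) = (Q \<in> F \<and> (\<exists>a\<in>Q. dom s = dom a))"
| "wf kr ar F (Neg \<phi>) = wf kr ar F \<phi>"
| "wf kr ar F (Conj \<Phi>) = (\<forall>i. wf kr ar F (\<Phi> i))"
| "wf kr ar F (Ex V \<phi>) = (small kr V \<and> wf kr ar F \<phi>)"

definition sentence :: "'k rel \<Rightarrow> ('s \<Rightarrow> nat) \<Rightarrow> ('k \<rightharpoonup> 'k) set set \<Rightarrow> ('s, 'k, 'k) fm \<Rightarrow> bool" where
  "sentence kr ar F \<phi> \<longleftrightarrow> wf kr ar F \<phi> \<and> fv \<phi> = {}"

definition models :: "('s, 'k) tstruct \<Rightarrow> ('s, 'k, 'k) fm \<Rightarrow> bool" where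
  "models M \<phi> \<longleftrightarrow> (\<forall>e. sat M e \<phi>)"

definition definable :: "'k rel \<Rightarrow> ('s \<Rightarrow> nat) \<Rightarrow> ('k \<rightharpoonup> 'k) set set \<Rightarrow> ('s, 'k) tstruct set \<Rightarrow> bool" where
  "definable kr ar F A \<longleftrightarrow>
     (\<exists>\<phi>. sentence kr ar F \<phi> \<and> (\<forall>M \<in> Xtau ar. M \<in> A \<longleftrightarrow> models M \<phi>))"

end

theory Submission
  imports Defs
begin
unbundle cardinal_syntax

locale kap =
  fixes kr :: "'k rel"
  assumes co: "card_order kr" and unc: "(natLeq, kr) \<in> ordLess"
begin

lemma Field_kr: "Field kr = UNIV" and Card_kr: "Card_order kr"
  using card_order_on_Card_order[OF co] by auto

lemma kr_iso: "kr =o |UNIV :: 'k set|"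
  using card_of_unique[OF co] .

lemma inf_k: "infinite (UNIV :: 'k set)"
proof -
  have "natLeq \<le>o kr" using unc ordLess_imp_ordLeq by blast
  hence "natLeq \<le>o |UNIV :: 'k set|" using kr_iso ordLeq_ordIso_trans by blast
  thus ?thesis using infinite_iff_natLeq_ordLeq by blast
qed

lemma small_iff: "small kr A \<longleftrightarrow> |A| <o |UNIV :: 'k set|"
  unfolding small_def using kr_iso ordIso_symmetric ordLess_ordIso_trans by blast

lemma small_subset: "small kr B \<Longrightarrow> A \<subseteq> B \<Longrightarrow> small kr A"
  unfolding small_def using card_of_mono1 ordLeq_ordLess_trans by blast

lemma small_Un: "small kr A \<Longrightarrow> small kr B \<Longrightarrow> small kr (A \<union> B)"
  unfolding small_def using card_of_Un_ordLess_infinite_Field[OF _ Card_kr] inf_k Field_kr by auto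

lemma small_finite: "finite A \<Longrightarrow> small kr A"
  unfolding small_iff
  using finite_ordLess_infinite[OF card_of_Well_order card_of_Well_order, of A "UNIV :: 'k set"] inf_k unfolding Field_card_of by blast

lemma small_image: "small kr A \<Longrightarrow> small kr (f ` A)"
  unfolding small_def using card_of_image ordLeq_ordLess_trans by blast

lemma small_underS: "small kr (underS kr a)"
  unfolding small_def using card_of_underS[OF Card_kr] Field_kr by auto

lemma small_enum: assumes "small kr D" shows "\<exists>a f. bij_betw f (underS kr a) D"
proof -
  have W: "Well_order kr" using Card_kr by (simp add: card_order_on_well_order_on)
  obtain a where "a \<in> Field kr" and iso: "|D| =o Restr kr (underS kr a)"
    using ordLess_iff_ordIso_Restr[OF W card_of_Well_order] assms unfolding small_def by blast
  then obtain f where "iso |D| (Restr kr (underS kr a)) f" unfolding ordIso_def by blast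
  hence "bij_betw f D (Field (Restr kr (underS kr a)))" unfolding iso_def Field_card_of by simp
  moreover have "Field (Restr kr (underS kr a)) = underS kr a"
  proof -
    have "Refl kr" using W unfolding well_order_on_def linear_order_on_def partial_order_on_def preorder_on_def by simp
    thus ?thesis using Field_kr unfolding refl_on_def Field_def by blast
  qed
  ultimately show ?thesis using bij_betw_inv by metis
qed

lemma small_UN_finite:
  assumes I: "small kr I" and F: "\<And>i. i \<in> I \<Longrightarrow> finite (A i)"
  shows "small kr (\<Union>i\<in>I. A i)"
proof (cases "finite I")
  case True thus ?thesis using F by (intro small_finite) auto
next
  case False
  obtain f :: "_ \<Rightarrow> _ \<Rightarrow> nat" where f: "\<And>i. i \<in> I \<Longrightarrow> inj_on (f i) (A i)"
  proof -
    have "\<forall>i\<in>I. \<exists>g::_\<Rightarrow>nat. inj_on g (A i)"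
      using F finite_imp_inj_to_nat_seg by blast
    from bchoice[OF this] obtain g :: "_ \<Rightarrow> _ \<Rightarrow> nat" where "\<forall>i\<in>I. inj_on (g i) (A i)" by blast
    then show ?thesis using that by blast
  qed
  have "inj_on (\<lambda>(i,x). (i, f i x)) (SIGMA i:I. A i)"
    using f unfolding inj_on_def by auto
  hence "|SIGMA i:I. A i| \<le>o |I \<times> (UNIV :: nat set)|"
    using card_of_ordLeq[of "SIGMA i:I. A i" "I \<times> (UNIV::nat set)"] by auto
  moreover have "|I \<times> (UNIV :: nat set)| =o |I|"
    using card_of_Times_infinite[OF False, of "UNIV :: nat set"] False infinite_iff_card_of_nat by blast
  ultimately have "|\<Union>i\<in>I. A i| \<le>o |I|"
    using card_of_UNION_Sigma ordLeq_transitive ordLeq_ordIso_trans by blast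
  thus ?thesis using I unfolding small_def using ordLeq_ordLess_trans by blast
qed

end

lemma sat_fv: "(\<And>v. v \<in> fv \<phi> \<Longrightarrow> e v = e' v) \<Longrightarrow> sat M e \<phi> = sat M e' \<phi>"
proof (induction \<phi> arbitrary: e e')
  case (Rel R xs)
  have m: "map e xs = map e' xs" by (rule map_cong[OF refl]) (use Rel in simp)
  show ?case by (simp only: sat.simps m)
next
  case (Eq x y)
  have "e x = e' x" "e y = e' y" using Eq by auto
  thus ?case by simp
next
  case (Orb Q s)
  have "map_option e \<circ> s = map_option e' \<circ> s"
  proof
    fix i show "(map_option e \<circ> s) i = (map_option e' \<circ> s) i"
      using Orb by (cases "s i") (auto simp: ran_def)
  qed
  thus ?case by (simp only: sat.simps)
next
  case (Neg \<phi>)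
  have "sat M e \<phi> = sat M e' \<phi>" by (rule Neg.IH) (use Neg.prems in simp)
  thus ?case by simp
next
  case (Conj \<Phi>)
  have "sat M e (\<Phi> i) = sat M e' (\<Phi> i)" for i
  proof (rule Conj.IH)
    show "\<Phi> i \<in> range \<Phi>" by simp
    fix v assume "v \<in> fv (\<Phi> i)" thus "e v = e' v" using Conj.prems by auto
  qed
  thus ?case by simp
next
  case (Ex V \<phi>)
  have H: "sat M e1 \<phi> \<Longrightarrow> sat M e2 \<phi>" if "\<And>v. v \<in> fv \<phi> \<Longrightarrow> e1 v = e2 v" for e1 e2
    using Ex.IH[of e1 e2] that by blast
  show ?case
  proof
    assume "sat M e (fm.Ex V \<phi>)"
    then obtain e1 where e1: "\<forall>v. v \<notin> V \<longrightarrow> e1 v = e v" "sat M e1 \<phi>" by auto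
    define e2 where "e2 = (\<lambda>v. if v \<in> V then e1 v else e' v)"
    have "sat M e2 \<phi>"
    proof (rule H[OF _ e1(2)])
      fix v assume "v \<in> fv \<phi>" thus "e1 v = e2 v" using e1 Ex.prems unfolding e2_def by simp
    qed
    moreover have "\<forall>v. v \<notin> V \<longrightarrow> e2 v = e' v" unfolding e2_def by simp
    ultimately show "sat M e' (fm.Ex V \<phi>)" by auto
  next
    assume "sat M e' (fm.Ex V \<phi>)"
    then obtain e1 where e1: "\<forall>v. v \<notin> V \<longrightarrow> e1 v = e' v" "sat M e1 \<phi>" by auto
    define e2 where "e2 = (\<lambda>v. if v \<in> V then e1 v else e v)"
    have "sat M e2 \<phi>"
    proof (rule H[OF _ e1(2)])
      fix v assume "v \<in> fv \<phi>" thus "e1 v = e2 v" using e1 Ex.prems unfolding e2_def by simp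
    qed
    moreover have "\<forall>v. v \<notin> V \<longrightarrow> e2 v = e v" unfolding e2_def by simp
    ultimately show "sat M e (fm.Ex V \<phi>)" by auto
  qed
qed

lemma act_Xtau: "M \<in> Xtau ar \<Longrightarrow> act g M \<in> Xtau ar"
  unfolding Xtau_def act_def by auto

lemma act_comp: "act g (act h M) = act (g \<circ> h) M"
  unfolding act_def by (auto simp: fun_eq_iff)

lemma act_id: "act id M = M"
  unfolding act_def by (auto simp: fun_eq_iff)

lemma act_inj: "inj g \<Longrightarrow> act g M R (map g xs) = M R xs"
  unfolding act_def by (auto dest: inj_map_eq_map[THEN iffD1, rotated])

lemma act_inv: "bij g \<Longrightarrow> act (inv g) M R xs = M R (map g xs)"
proof -
  assume b: "bij g"
  have "map g (map (inv g) ys) = ys" for ys using b by (simp add: bij_is_surj surj_f_inv_f map_idI)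
  moreover have "map (inv g) (map g ys) = ys" for ys using b by (simp add: bij_is_inj map_idI)
  ultimately show ?thesis unfolding act_def by metis
qed

lemma sub_bij: "subgroup_Sk G \<Longrightarrow> g \<in> G \<Longrightarrow> bij g"
  unfolding subgroup_Sk_def perms_def by auto

lemma sub_inv: "subgroup_Sk G \<Longrightarrow> g \<in> G \<Longrightarrow> inv g \<in> G"
  unfolding subgroup_Sk_def by auto

lemma sub_comp: "subgroup_Sk G \<Longrightarrow> g \<in> G \<Longrightarrow> h \<in> G \<Longrightarrow> g \<circ> h \<in> G"
  unfolding subgroup_Sk_def by auto

lemma sub_id: "subgroup_Sk G \<Longrightarrow> id \<in> G"
  unfolding subgroup_Sk_def by auto

lemma act_inv_cancel: "bij g \<Longrightarrow> act g (act (inv g) M) = M"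
  by (simp add: act_comp bij_is_surj surj_iff[THEN iffD1] act_id)

lemma act_inv_cancel2: "bij g \<Longrightarrow> act (inv g) (act g M) = M"
  by (simp add: act_comp bij_is_inj inv_o_cancel act_id)

lemma sat_act:
  assumes G: "subgroup_Sk G" and g: "g \<in> G" and w: "wf kr ar (orbits kr G) \<phi>"
  shows "sat (act g M) (g \<circ> e) \<phi> = sat M e \<phi>"
  using w
proof (induction \<phi> arbitrary: e)
  case (Rel R xs)
  have "inj g" using sub_bij[OF G g] bij_is_inj by blast
  thus ?case using act_inj[of g M R "map e xs"] by (simp add: comp_def)
next
  case (Eq x y)
  have "inj g" using sub_bij[OF G g] bij_is_inj by blast
  thus ?case by (simp add: inj_eq)
next
  case (Orb Q s)
  then obtain a where Q: "Q = {map_option h \<circ> a | h. h \<in> G}" unfolding orbits_def by auto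
  have b: "bij g" using sub_bij[OF G g] .
  have eq: "map_option (g \<circ> e) \<circ> s = map_option g \<circ> (map_option e \<circ> s)"
    by (simp add: fun_eq_iff option.map_comp)
  show ?case
  proof
    assume "sat (act g M) (g \<circ> e) (Orb Q s)"
    then obtain h where h: "h \<in> G" "map_option g \<circ> (map_option e \<circ> s) = map_option h \<circ> a"
      using Q eq by auto
    hence "map_option (inv g) \<circ> (map_option g \<circ> (map_option e \<circ> s)) = map_option (inv g \<circ> h) \<circ> a"
      by (simp add: fun_eq_iff option.map_comp)
    moreover have "map_option (inv g) \<circ> (map_option g \<circ> (map_option e \<circ> s)) = map_option e \<circ> s"
      using b by (simp add: fun_eq_iff option.map_comp comp_def inv_f_f[OF bij_is_inj[OF b]] option.map_ident)
    ultimately have "map_option e \<circ> s = map_option (inv g \<circ> h) \<circ> a" by simp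
    moreover have "inv g \<circ> h \<in> G" using G g h sub_inv sub_comp by blast
    ultimately show "sat M e (Orb Q s)" using Q by auto
  next
    assume "sat M e (Orb Q s)"
    then obtain h where h: "h \<in> G" "map_option e \<circ> s = map_option h \<circ> a" using Q by auto
    hence "map_option (g \<circ> e) \<circ> s = map_option (g \<circ> h) \<circ> a"
      using eq by (simp add: fun_eq_iff option.map_comp)
    moreover have "g \<circ> h \<in> G" using G g h sub_comp by blast
    ultimately show "sat (act g M) (g \<circ> e) (Orb Q s)" using Q by auto
  qed
next
  case (Ex V \<phi>)
  have b: "bij g" using sub_bij[OF G g] .
  show ?case
  proof
    assume "sat (act g M) (g \<circ> e) (fm.Ex V \<phi>)"
    then obtain e' where e': "\<forall>v. v \<notin> V \<longrightarrow> e' v = g (e v)" "sat (act g M) e' \<phi>" by auto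
    have "e' = g \<circ> (inv g \<circ> e')" using b by (simp add: fun_eq_iff bij_is_surj surj_f_inv_f)
    hence "sat (act g M) (g \<circ> (inv g \<circ> e')) \<phi>" using e'(2) by metis
    moreover have w': "wf kr ar (orbits kr G) \<phi>" using Ex.prems by simp
    ultimately have "sat M (inv g \<circ> e') \<phi>" using Ex.IH[OF w'] by blast
    moreover have "\<forall>v. v \<notin> V \<longrightarrow> (inv g \<circ> e') v = e v" using e' b by (simp add: bij_is_inj)
    ultimately show "sat M e (fm.Ex V \<phi>)" unfolding sat.simps by (intro exI[of _ "inv g \<circ> e'"]) simp
  next
    assume "sat M e (fm.Ex V \<phi>)"
    then obtain e' where e': "\<forall>v. v \<notin> V \<longrightarrow> e' v = e v" "sat M e' \<phi>" by auto
    moreover have w': "wf kr ar (orbits kr G) \<phi>" using Ex.prems by simp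
    ultimately have "sat (act g M) (g \<circ> e') \<phi>" using Ex.IH[OF w', of e'] by blast
    moreover have "\<forall>v. v \<notin> V \<longrightarrow> (g \<circ> e') v = g (e v)" using e' by simp
    ultimately show "sat (act g M) (g \<circ> e) (fm.Ex V \<phi>)" unfolding sat.simps by (intro exI[of _ "g \<circ> e'"]) simp
  qed
qed auto

lemma models_act:
  assumes G: "subgroup_Sk G" and g: "g \<in> G" and w: "wf kr ar (orbits kr G) \<phi>"
  shows "models (act g M) \<phi> = models M \<phi>"
proof -
  have b: "bij g" using sub_bij[OF G g] .
  have "sat (act g M) e \<phi> = sat M (inv g \<circ> e) \<phi>" for e
  proof -
    have "e = g \<circ> (inv g \<circ> e)" using b by (simp add: fun_eq_iff bij_is_surj surj_f_inv_f)
    thus ?thesis using sat_act[OF G g w, of M "inv g \<circ> e"] by metis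
  qed
  moreover have "sat M e \<phi> = sat (act g M) (g \<circ> e) \<phi>" for e using sat_act[OF G g w] by simp
  ultimately show ?thesis unfolding models_def by metis
qed


locale kap2 = kap kr for kr :: "'k rel" +
  assumes kseq_iso: "|kseqs kr :: ('k \<rightharpoonup> 'k) set| =o kr"
begin

lemma kseqs_le: "|kseqs kr :: ('k \<rightharpoonup> 'k) set| \<le>o |UNIV :: 'k set|"
  using kseq_iso kr_iso ordIso_transitive ordIso_iff_ordLeq by blast

lemma funs_enum:
  fixes V :: "'v set" and e :: "'v \<Rightarrow> 'k"
  assumes "small kr V"
  shows "\<exists>h :: 'k \<Rightarrow> ('v \<Rightarrow> 'k). range h = {e'. \<forall>v. v \<notin> V \<longrightarrow> e' v = e v}"
proof -
  obtain a f where f: "bij_betw f (underS kr a) V" using small_enum[OF assms] by blast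
  let ?S = "{e'. \<forall>v. v \<notin> V \<longrightarrow> e' v = e v}"
  define P where "P = (\<lambda>e'::'v \<Rightarrow> 'k. \<lambda>i. if i \<in> underS kr a then Some (e' (f i)) else None)"
  have "inj_on P ?S"
  proof (rule inj_onI)
    fix e1 e2 assume e1: "e1 \<in> ?S" and e2: "e2 \<in> ?S" and eq: "P e1 = P e2"
    show "e1 = e2"
    proof
      fix v show "e1 v = e2 v"
      proof (cases "v \<in> V")
        case True
        then obtain i where i: "i \<in> underS kr a" "v = f i" using f unfolding bij_betw_def by blast
        have "P e1 i = P e2 i" using eq by simp
        thus ?thesis using i unfolding P_def by simp
      next
        case False thus ?thesis using e1 e2 by simp
      qed
    qed
  qed
  moreover have "P ` ?S \<subseteq> kseqs kr"
  proof -
    have "dom (P e') = underS kr a" for e' unfolding P_def dom_def by auto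
    thus ?thesis unfolding kseqs_def by blast
  qed
  ultimately have "|?S| \<le>o |kseqs kr :: ('k \<rightharpoonup> 'k) set|"
    using card_of_ordLeq[of ?S "kseqs kr :: ('k \<rightharpoonup> 'k) set"] by auto
  hence "|?S| \<le>o |UNIV :: 'k set|" using kseqs_le ordLeq_transitive by blast
  moreover have "?S \<noteq> {}" by auto
  ultimately obtain h :: "'k \<Rightarrow> ('v \<Rightarrow> 'k)" where "h ` UNIV = ?S"
    using card_of_ordLeq2[of ?S "UNIV :: 'k set"] by auto
  thus ?thesis by blast
qed

lemma Xtau_kB: "Xtau ar \<in> kBorel kr ar"
proof -
  have "basic_open ar Map.empty = Xtau ar" unfolding basic_open_def by auto
  moreover have "is_basic_cond kr ar Map.empty" unfolding is_basic_cond_def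
    using small_finite[of "{} :: ('s \<times> 'k list) set"] by simp
  ultimately show ?thesis using kBorel.basic by metis
qed

lemma empty_kB: "{} \<in> kBorel kr ar"
  using kBorel.compl[OF Xtau_kB] by simp

lemma sat_kB:
  fixes \<phi> :: "('s, 'k, 'v) fm"
  shows "wf kr ar F \<phi> \<Longrightarrow> {M \<in> Xtau ar. sat M e \<phi>} \<in> kBorel kr ar"
proof (induction \<phi> arbitrary: e)
  case (Rel R xs)
  let ?s = "[(R, map e xs) \<mapsto> True]"
  have "basic_open ar ?s = {M \<in> Xtau ar. sat M e (Rel R xs)}"
    unfolding basic_open_def by auto
  moreover have "is_basic_cond kr ar ?s" unfolding is_basic_cond_def
    using small_finite[of "{(R, map e xs)}"] Rel by simp
  ultimately show ?case using kBorel.basic[of kr ar ?s] by simp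
next
  case (Eq x y)
  show ?case
  proof (cases "e x = e y")
    case True hence eqs: "{M \<in> Xtau ar. sat M e (Eq x y)} = Xtau ar" by simp
    show ?thesis by (simp only: eqs Xtau_kB)
  next
    case False hence eqs: "{M \<in> Xtau ar. sat M e (Eq x y)} = {}" by simp
    show ?thesis by (simp only: eqs empty_kB)
  qed
next
  case (Orb Q s)
  show ?case
  proof (cases "map_option e \<circ> s \<in> Q")
    case True hence eqs: "{M \<in> Xtau ar. sat M e (Orb Q s)} = Xtau ar" by simp
    show ?thesis by (simp only: eqs Xtau_kB)
  next
    case False hence eqs: "{M \<in> Xtau ar. sat M e (Orb Q s)} = {}" by simp
    show ?thesis by (simp only: eqs empty_kB)
  qed
next
  case (Neg \<phi>)
  have eq: "{M \<in> Xtau ar. sat M e (Neg \<phi>)} = Xtau ar - {M \<in> Xtau ar. sat M e \<phi>}" by auto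
  have h: "{M \<in> Xtau ar. sat M e \<phi>} \<in> kBorel kr ar" using Neg.IH Neg.prems by simp
  show ?case unfolding eq by (rule kBorel.compl[OF h])
next
  case (Conj \<Phi>)
  have eq: "{M \<in> Xtau ar. sat M e (Conj \<Phi>)} = Xtau ar \<inter> (\<Inter>i. {M \<in> Xtau ar. sat M e (\<Phi> i)})" by auto
  have h: "{M \<in> Xtau ar. sat M e (\<Phi> i)} \<in> kBorel kr ar" for i using Conj.IH Conj.prems by simp
  show ?case unfolding eq by (rule kBorel.inter[OF h])
next
  case (Ex V \<phi>)
  obtain h :: "'k \<Rightarrow> ('v \<Rightarrow> 'k)" where h: "range h = {e'. \<forall>v. v \<notin> V \<longrightarrow> e' v = e v}"
    using funs_enum[of V e] Ex.prems by auto
  have eq: "{M \<in> Xtau ar. sat M e (fm.Ex V \<phi>)} = (\<Union>i. {M \<in> Xtau ar. sat M (h i) \<phi>})"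
  proof -
    have "sat M e (fm.Ex V \<phi>) \<longleftrightarrow> (\<exists>i. sat M (h i) \<phi>)" for M
    proof -
      have "sat M e (fm.Ex V \<phi>) \<longleftrightarrow> (\<exists>e' \<in> range h. sat M e' \<phi>)" using h by auto
      thus ?thesis by auto
    qed
    thus ?thesis by auto
  qed
  have hh: "{M \<in> Xtau ar. sat M (h i) \<phi>} \<in> kBorel kr ar" for i using Ex.IH Ex.prems by simp
  show ?case unfolding eq by (rule kBorel.union[OF hh])
qed

lemma dir1:
  assumes G: "subgroup_Sk G" and d: "definable kr ar (orbits kr G) A" and AX: "A \<subseteq> Xtau ar"
  shows "A \<in> kBorel kr ar \<and> invariant G A"
proof -
  obtain \<phi> where s: "sentence kr ar (orbits kr G) \<phi>" and eqA: "\<forall>M \<in> Xtau ar. M \<in> A \<longleftrightarrow> models M \<phi>"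
    using d unfolding definable_def by blast
  have w: "wf kr ar (orbits kr G) \<phi>" and fv0: "fv \<phi> = {}" using s unfolding sentence_def by auto
  have mod_sat: "models M \<phi> \<longleftrightarrow> sat M id \<phi>" for M
    unfolding models_def using sat_fv[of \<phi> _ id M] fv0 by auto
  have A_eq: "A = {M \<in> Xtau ar. sat M id \<phi>}" using AX eqA mod_sat by auto
  have "A \<in> kBorel kr ar" using A_eq sat_kB[OF w] by simp
  moreover have "invariant G A" unfolding invariant_def
  proof
    fix g assume g: "g \<in> G"
    have b: "bij g" using sub_bij[OF G g] .
    have ig: "inv g \<in> G" using sub_inv[OF G g] .
    have A_eq2: "A = {M \<in> Xtau ar. models M \<phi>}" using AX eqA by auto
    show "act g ` A = A"
    proof
      show "act g ` A \<subseteq> A" unfolding A_eq2 using act_Xtau models_act[OF G g w] by auto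
      show "A \<subseteq> act g ` A"
      proof
        fix M assume M: "M \<in> A"
        have "act (inv g) M \<in> A" using M unfolding A_eq2 using act_Xtau models_act[OF G ig w] by auto
        moreover have "M = act g (act (inv g) M)" by (simp add: act_inv_cancel[OF b])
        ultimately show "M \<in> act g ` A" by blast
      qed
    qed
  qed
  ultimately show ?thesis by blast
qed

end

locale kap3 = kap2 kr for kr :: "'k rel" +
  fixes G :: "('k \<Rightarrow> 'k) set"
  assumes subG: "subgroup_Sk G" and baire: "kappa_Baire kr G"
begin

definition N :: "'k set \<Rightarrow> ('k \<Rightarrow> 'k) \<Rightarrow> ('k \<Rightarrow> 'k) set" where
  "N D e = {h \<in> G. \<forall>x\<in>D. h x = e x}"

definition realz :: "'k set \<Rightarrow> ('k \<Rightarrow> 'k) \<Rightarrow> bool" where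
  "realz D e \<longleftrightarrow> (\<exists>g\<in>G. \<forall>x\<in>D. g x = e x)"

definition opendense :: "('k \<Rightarrow> 'k) set \<Rightarrow> bool" where
  "opendense U \<longleftrightarrow> rel_open kr G U \<and> rel_dense kr G U"

definition comeager :: "('k \<Rightarrow> 'k) set \<Rightarrow> ('k \<Rightarrow> 'k) set \<Rightarrow> bool" where
  "comeager X T \<longleftrightarrow> (\<exists>U :: 'k \<Rightarrow> ('k \<Rightarrow> 'k) set. (\<forall>i. opendense (U i)) \<and> X \<inter> (\<Inter>i. U i) \<subseteq> T)"

lemma G_perms: "G \<subseteq> perms" using subG unfolding subgroup_Sk_def by blast

lemma nbhd_open: assumes "small kr A" shows "Sk_open kr (nbhd g A)"
  unfolding Sk_open_def
proof (intro conjI ballI)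
  show "nbhd g A \<subseteq> perms" by (auto simp: nbhd_def)
  fix h assume "h \<in> nbhd g A"
  hence "nbhd h A \<subseteq> nbhd g A" by (auto simp: nbhd_def)
  thus "\<exists>A'. small kr A' \<and> nbhd h A' \<subseteq> nbhd g A" using assms by blast
qed

lemma N_eq: "N D e = G \<inter> nbhd e D"
  unfolding N_def nbhd_def using G_perms by blast

lemma N_open: "small kr D \<Longrightarrow> rel_open kr G (N D e)"
  unfolding rel_open_def N_eq using nbhd_open by blast

lemma N_self: "g \<in> G \<Longrightarrow> g \<in> N D g"
  unfolding N_def by simp

lemma realz_N: "realz D e \<Longrightarrow> \<exists>g\<in>G. N D e = N D g"
proof -
  assume "realz D e"
  then obtain g where g: "g \<in> G" "\<forall>x\<in>D. g x = e x" unfolding realz_def by blast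
  hence "N D e = N D g" unfolding N_def by auto
  thus ?thesis using g by blast
qed

lemma realz_ne: "realz D e \<Longrightarrow> N D e \<noteq> {}"
  unfolding realz_def N_def by force

lemma rel_open_sub: "rel_open kr G Op \<Longrightarrow> Op \<subseteq> G"
  unfolding rel_open_def by blast

lemma rel_open_basis:
  assumes "rel_open kr G Op" and "g \<in> Op"
  shows "\<exists>A. small kr A \<and> N A g \<subseteq> Op"
proof -
  obtain W where W: "Sk_open kr W" "Op = G \<inter> W" using assms(1) unfolding rel_open_def by blast
  then obtain A where "small kr A" "nbhd g A \<subseteq> W" using assms(2) unfolding Sk_open_def by blast
  thus ?thesis using W unfolding N_eq by blast
qed

lemma rel_open_I:
  assumes sub: "Op \<subseteq> G" and loc: "\<And>g. g \<in> Op \<Longrightarrow> \<exists>A. small kr A \<and> N A g \<subseteq> Op"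
  shows "rel_open kr G Op"
proof -
  define W where "W = \<Union>{nbhd g A | g A. g \<in> Op \<and> small kr A \<and> N A g \<subseteq> Op}"
  have "Sk_open kr W"
    unfolding Sk_open_def
  proof
    show "W \<subseteq> perms" unfolding W_def nbhd_def by blast
    show "\<forall>h\<in>W. \<exists>A. small kr A \<and> nbhd h A \<subseteq> W"
    proof
      fix h assume "h \<in> W"
      then obtain g A where gA: "g \<in> Op" "small kr A" "N A g \<subseteq> Op" "h \<in> nbhd g A" unfolding W_def by blast
      have "nbhd h A \<subseteq> nbhd g A" using gA(4) unfolding nbhd_def by auto
      moreover have "nbhd g A \<subseteq> W" using gA unfolding W_def by blast
      ultimately show "\<exists>A. small kr A \<and> nbhd h A \<subseteq> W" using gA(2) by blast
    qed
  qed
  moreover have "Op = G \<inter> W"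
  proof
    show "Op \<subseteq> G \<inter> W"
    proof
      fix g assume g: "g \<in> Op"
      then obtain A where A: "small kr A" "N A g \<subseteq> Op" using loc by blast
      have "g \<in> nbhd g A" using g sub G_perms unfolding nbhd_def by blast
      thus "g \<in> G \<inter> W" using g sub A unfolding W_def by blast
    qed
    show "G \<inter> W \<subseteq> Op"
    proof
      fix h assume "h \<in> G \<inter> W"
      then obtain g A where gA: "N A g \<subseteq> Op" "h \<in> nbhd g A" "h \<in> G" unfolding W_def by blast
      hence "h \<in> N A g" unfolding N_eq by blast
      thus "h \<in> Op" using gA by blast
    qed
  qed
  ultimately show ?thesis unfolding rel_open_def by blast
qed

lemma rel_dense_I:
  assumes sub: "D \<subseteq> G" and d: "\<And>g A. g \<in> G \<Longrightarrow> small kr A \<Longrightarrow> N A g \<inter> D \<noteq> {}"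
  shows "rel_dense kr G D"
  unfolding rel_dense_def
proof (intro conjI sub allI impI)
  fix V assume V: "rel_open kr G V \<and> V \<noteq> {}"
  then obtain g where g: "g \<in> V" by blast
  then obtain A where A: "small kr A" "N A g \<subseteq> V" using rel_open_basis V by blast
  have "g \<in> G" using g V rel_open_sub by blast
  thus "V \<inter> D \<noteq> {}" using d[OF _ A(1)] A(2) by blast
qed

lemma G_open: "rel_open kr G G"
  by (rule rel_open_I) (auto simp: N_def intro: small_finite[of "{}"])

lemma G_opendense: "opendense G"
  unfolding opendense_def rel_dense_def using G_open rel_open_sub by blast

lemma comeager_sub: "X \<subseteq> T \<Longrightarrow> comeager X T"
  unfolding comeager_def using G_opendense by (intro exI[of _ "\<lambda>_. G"]) blast

lemma opendense_comeager: "opendense Op \<Longrightarrow> comeager X Op"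
  unfolding comeager_def by (rule exI[of _ "\<lambda>_. Op"]) blast

lemma comeager_mono: "comeager X T \<Longrightarrow> X' \<subseteq> X \<Longrightarrow> T \<subseteq> T' \<Longrightarrow> comeager X' T'"
  unfolding comeager_def by blast

lemma comeager_INT:
  assumes "\<And>i::'k. comeager X (T i)"
  shows "comeager X (\<Inter>i. T i)"
proof -
  have "\<forall>i. \<exists>Ui :: 'k \<Rightarrow> ('k \<Rightarrow> 'k) set. (\<forall>j. opendense (Ui j)) \<and> X \<inter> (\<Inter>j. Ui j) \<subseteq> T i"
  proof
    fix i show "\<exists>Ui :: 'k \<Rightarrow> ('k \<Rightarrow> 'k) set. (\<forall>j. opendense (Ui j)) \<and> X \<inter> (\<Inter>j. Ui j) \<subseteq> T i"
      using assms[of i] unfolding comeager_def .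
  qed
  from choice[OF this] obtain U :: "'k \<Rightarrow> 'k \<Rightarrow> ('k \<Rightarrow> 'k) set" where UU: "\<forall>i. (\<forall>j. opendense (U i j)) \<and> X \<inter> (\<Inter>j. U i j) \<subseteq> T i"
    by blast
  hence U: "\<And>i. \<forall>j. opendense (U i j)" "\<And>i. X \<inter> (\<Inter>j. U i j) \<subseteq> T i" by auto
  have "|UNIV \<times> UNIV :: ('k \<times> 'k) set| =o |UNIV :: 'k set|"
    by (rule card_of_Times_same_infinite[OF inf_k])
  hence "|UNIV :: 'k set| =o |UNIV \<times> UNIV :: ('k \<times> 'k) set|" by (rule ordIso_symmetric)
  hence "\<exists>p :: 'k \<Rightarrow> 'k \<times> 'k. bij_betw p UNIV (UNIV \<times> UNIV)" by (rule card_of_ordIso[THEN iffD2])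
  then obtain p :: "'k \<Rightarrow> 'k \<times> 'k" where p: "bij_betw p UNIV (UNIV \<times> UNIV)" by blast
  define U' where "U' = (\<lambda>j. U (fst (p j)) (snd (p j)))"
  have "\<forall>j. opendense (U' j)" unfolding U'_def using U(1) by simp
  moreover have "X \<inter> (\<Inter>j. U' j) \<subseteq> (\<Inter>i. T i)"
  proof
    fix g assume g: "g \<in> X \<inter> (\<Inter>j. U' j)"
    have "g \<in> U i j" for i j
    proof -
      have "(i, j) \<in> p ` UNIV" using p unfolding bij_betw_def by simp
      then obtain k where k: "(i, j) = p k" by (rule rangeE)
      have "g \<in> U' k" using g by blast
      thus ?thesis using k[symmetric] unfolding U'_def by simp
    qed
    hence "g \<in> X \<inter> (\<Inter>j. U i j)" for i using g by blast
    thus "g \<in> (\<Inter>i. T i)" using U(2) by blast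
  qed
  ultimately show ?thesis unfolding comeager_def by (intro exI[of _ U'] conjI)
qed

lemma comeager_Int:
  assumes "comeager X T1" "comeager X T2"
  shows "comeager X (T1 \<inter> T2)"
proof -
  obtain k0 :: 'k where True by blast
  have "UNIV \<noteq> {k0}" using inf_k by (metis finite.emptyI finite_insert)
  have "\<exists>k1. k0 \<noteq> k1"
  proof (rule ccontr)
    assume "\<not> (\<exists>k1. k0 \<noteq> k1)"
    hence "UNIV = {k0}" by auto
    thus False using \<open>UNIV \<noteq> {k0}\<close> by simp
  qed
  then obtain k1 where k: "k0 \<noteq> k1" by blast
  have "comeager X (\<Inter>i. if i = k0 then T1 else T2)"
    by (rule comeager_INT) (use assms in auto)
  moreover have "(\<Inter>i. if i = k0 then T1 else T2) \<subseteq> T1 \<inter> T2"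
  proof
    fix x assume x: "x \<in> (\<Inter>i. if i = k0 then T1 else T2)"
    have "x \<in> (if k0 = k0 then T1 else T2)" using x by blast
    moreover have "x \<in> (if k1 = k0 then T1 else T2)" using x by blast
    ultimately show "x \<in> T1 \<inter> T2" using k by simp
  qed
  ultimately show ?thesis using comeager_mono by blast
qed

lemma baire_ne:
  assumes "small kr D" "realz D e" "comeager (N D e) T"
  shows "\<exists>h \<in> N D e. h \<in> T"
proof -
  obtain U :: "'k \<Rightarrow> ('k \<Rightarrow> 'k) set" where U: "\<forall>i. opendense (U i)" "N D e \<inter> (\<Inter>i. U i) \<subseteq> T"
    using assms(3) unfolding comeager_def by blast
  have "\<forall>i. rel_open kr G (U i) \<and> rel_dense kr G (U i)" using U(1) unfolding opendense_def by simp
  moreover have "(\<forall>i. rel_open kr G (U i) \<and> rel_dense kr G (U i)) \<longrightarrow> rel_dense kr G (\<Inter>i. U i)"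
    using baire unfolding kappa_Baire_def by (rule spec)
  ultimately have "rel_dense kr G (\<Inter>i. U i)" by (rule rev_mp)
  moreover have "rel_open kr G (N D e) \<and> N D e \<noteq> {}" using N_open assms realz_ne by auto
  ultimately have "N D e \<inter> (\<Inter>i. U i) \<noteq> {}" unfolding rel_dense_def by (elim conjE allE[of _ "N D e"]) simp
  thus ?thesis using U(2) by blast
qed

end

context kap3 begin

definition BP :: "('k \<Rightarrow> 'k) set \<Rightarrow> bool" where
  "BP T \<longleftrightarrow> (\<exists>Op C. rel_open kr G Op \<and> comeager G C \<and> (\<forall>g\<in>G \<inter> C. g \<in> T \<longleftrightarrow> g \<in> Op))"

lemma bp_open: "rel_open kr G T \<Longrightarrow> BP T"
  unfolding BP_def using comeager_sub[of G G] by blast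

lemma bp_compl:
  assumes "BP T" shows "BP (G - T)"
proof -
  obtain Op C where oc: "rel_open kr G Op" "comeager G C" "\<forall>g\<in>G \<inter> C. g \<in> T \<longleftrightarrow> g \<in> Op"
    using assms unfolding BP_def by blast
  define Ext where "Ext = {g \<in> G. \<exists>A. small kr A \<and> N A g \<inter> Op = {}}"
  have Ext_Op: "Ext \<inter> Op = {}"
  proof -
    have "g \<notin> Op" if gE: "g \<in> Ext" for g
    proof -
      obtain A where "g \<in> G" "N A g \<inter> Op = {}" using gE unfolding Ext_def by blast
      thus ?thesis using N_self by blast
    qed
    thus ?thesis by blast
  qed
  have Ext_loc: "\<exists>A. small kr A \<and> N A g \<subseteq> Ext" if g: "g \<in> Ext" for g
  proof -
    obtain A where A: "g \<in> G" "small kr A" "N A g \<inter> Op = {}" using g unfolding Ext_def by blast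
    have "N A g \<subseteq> Ext"
    proof
      fix h assume h: "h \<in> N A g"
      hence "N A h = N A g" unfolding N_def by auto
      moreover have "h \<in> G" using h unfolding N_def by blast
      ultimately show "h \<in> Ext" using A unfolding Ext_def by auto
    qed
    thus ?thesis using A by blast
  qed
  have Ext_open: "rel_open kr G Ext"
  proof (rule rel_open_I)
    show "Ext \<subseteq> G" unfolding Ext_def by blast
  qed (rule Ext_loc)
  have od: "opendense (Op \<union> Ext)"
    unfolding opendense_def
  proof
    show "rel_open kr G (Op \<union> Ext)"
    proof (rule rel_open_I)
      show "Op \<union> Ext \<subseteq> G" using rel_open_sub[OF oc(1)] unfolding Ext_def by blast
      fix g assume "g \<in> Op \<union> Ext"
      thus "\<exists>A. small kr A \<and> N A g \<subseteq> Op \<union> Ext"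
      proof
        assume "g \<in> Op"
        then obtain A where "small kr A" "N A g \<subseteq> Op" using rel_open_basis[OF oc(1)] by blast
        thus ?thesis by blast
      next
        assume "g \<in> Ext"
        then obtain A where "small kr A" "N A g \<subseteq> Ext" using Ext_loc by blast
        thus ?thesis by blast
      qed
    qed
    show "rel_dense kr G (Op \<union> Ext)"
    proof (rule rel_dense_I)
      show "Op \<union> Ext \<subseteq> G" using rel_open_sub[OF oc(1)] unfolding Ext_def by blast
      fix g and A :: "'k set" assume g: "g \<in> G" and A: "small kr A"
      show "N A g \<inter> (Op \<union> Ext) \<noteq> {}"
      proof (cases "N A g \<inter> Op = {}")
        case True
        hence "g \<in> Ext" using g A unfolding Ext_def by blast
        thus ?thesis using N_self[OF g] by blast
      next
        case False thus ?thesis by blast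
      qed
    qed
  qed
  have "comeager G (C \<inter> (Op \<union> Ext))"
    by (rule comeager_Int[OF oc(2) opendense_comeager[OF od]])
  moreover have "\<forall>g\<in>G \<inter> (C \<inter> (Op \<union> Ext)). g \<in> G - T \<longleftrightarrow> g \<in> Ext"
    using oc(3) Ext_Op by blast
  ultimately show ?thesis unfolding BP_def using Ext_open by blast
qed

lemma bp_union:
  assumes "\<And>i::'k. BP (T i)" shows "BP (\<Union>i. T i)"
proof -
  have "\<forall>i. \<exists>OC :: ('k \<Rightarrow> 'k) set \<times> ('k \<Rightarrow> 'k) set. rel_open kr G (fst OC) \<and> comeager G (snd OC) \<and>
          (\<forall>g\<in>G \<inter> snd OC. g \<in> T i \<longleftrightarrow> g \<in> fst OC)"
  proof
    fix i
    obtain Op C where "rel_open kr G Op" "comeager G C" "\<forall>g\<in>G \<inter> C. g \<in> T i \<longleftrightarrow> g \<in> Op"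
      using assms[of i] unfolding BP_def by blast
    thus "\<exists>OC :: ('k \<Rightarrow> 'k) set \<times> ('k \<Rightarrow> 'k) set. rel_open kr G (fst OC) \<and> comeager G (snd OC) \<and>
          (\<forall>g\<in>G \<inter> snd OC. g \<in> T i \<longleftrightarrow> g \<in> fst OC)"
      by (intro exI[of _ "(Op, C)"]) simp
  qed
  from choice[OF this] obtain OC :: "'k \<Rightarrow> ('k \<Rightarrow> 'k) set \<times> ('k \<Rightarrow> 'k) set" where
    oc: "\<forall>i. rel_open kr G (fst (OC i)) \<and> comeager G (snd (OC i)) \<and>
          (\<forall>g\<in>G \<inter> snd (OC i). g \<in> T i \<longleftrightarrow> g \<in> fst (OC i))" by blast
  have "rel_open kr G (\<Union>i. fst (OC i))"
  proof (rule rel_open_I)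
    show "(\<Union>i. fst (OC i)) \<subseteq> G" using oc rel_open_sub by blast
    fix g assume "g \<in> (\<Union>i. fst (OC i))"
    then obtain i where i: "g \<in> fst (OC i)" by blast
    then obtain A where "small kr A" "N A g \<subseteq> fst (OC i)" using rel_open_basis oc by blast
    thus "\<exists>A. small kr A \<and> N A g \<subseteq> (\<Union>i. fst (OC i))" by blast
  qed
  moreover have "comeager G (\<Inter>i. snd (OC i))" using oc by (intro comeager_INT) simp
  moreover have "\<forall>g\<in>G \<inter> (\<Inter>i. snd (OC i)). g \<in> (\<Union>i. T i) \<longleftrightarrow> g \<in> (\<Union>i. fst (OC i))"
    using oc by blast
  ultimately show ?thesis unfolding BP_def by blast
qed

definition S :: "('s, 'k) tstruct \<Rightarrow> ('s, 'k) tstruct set \<Rightarrow> ('k \<Rightarrow> 'k) set" where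
  "S M B = {g \<in> G. act (inv g) M \<in> B}"

definition Lits :: "('s, 'k) tstruct \<Rightarrow> ('s \<times> 'k list \<rightharpoonup> bool) \<Rightarrow> ('k \<Rightarrow> 'k) \<Rightarrow> bool" where
  "Lits M s g \<longleftrightarrow> (\<forall>R xs b. s (R, xs) = Some b \<longrightarrow> M R (map g xs) = b)"

definition Es :: "('s \<times> 'k list \<rightharpoonup> bool) \<Rightarrow> 'k set" where
  "Es s = (\<Union>p\<in>dom s. set (snd p))"

lemma small_Es: "is_basic_cond kr ar s \<Longrightarrow> small kr (Es s)"
  unfolding Es_def is_basic_cond_def by (rule small_UN_finite) auto

lemma Lits_cong:
  assumes "\<And>x. x \<in> Es s \<Longrightarrow> g x = g' x" shows "Lits M s g = Lits M s g'"
proof -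
  have "map g xs = map g' xs" if "(R, xs) \<in> dom s" for R xs
    by (rule map_cong[OF refl]) (use that assms in \<open>force simp: Es_def\<close>)
  thus ?thesis unfolding Lits_def by (metis domI)
qed

lemma kB_sub: "B \<in> kBorel kr ar \<Longrightarrow> B \<subseteq> Xtau ar"
  by (induction rule: kBorel.induct) (auto simp: basic_open_def)

lemma S_compl: "M \<in> Xtau ar \<Longrightarrow> S M (Xtau ar - B) = G - S M B"
  unfolding S_def using act_Xtau by blast

lemma S_union: "S M (\<Union>i. F i) = (\<Union>i. S M (F i))"
  unfolding S_def by blast

lemma S_inter: "M \<in> Xtau ar \<Longrightarrow> S M (Xtau ar \<inter> (\<Inter>i. F i)) = G - (\<Union>i. G - S M (F i))"
  unfolding S_def using act_Xtau by blast

lemma S_basic: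
  assumes M: "M \<in> Xtau ar" shows "S M (basic_open ar s) = {g \<in> G. Lits M s g}"
proof -
  have "act (inv g) M \<in> basic_open ar s \<longleftrightarrow> Lits M s g" if g: "g \<in> G" for g
  proof -
    have b: "bij g" using sub_bij[OF subG g] .
    have "act (inv g) M \<in> Xtau ar" using act_Xtau[OF M] .
    thus ?thesis unfolding basic_open_def Lits_def using act_inv[OF b, of M] by simp
  qed
  thus ?thesis unfolding S_def by blast
qed

lemma S_basic_open:
  assumes M: "M \<in> Xtau ar" and s: "is_basic_cond kr ar s"
  shows "rel_open kr G (S M (basic_open ar s))"
  unfolding S_basic[OF M]
proof (rule rel_open_I)
  show "{g \<in> G. Lits M s g} \<subseteq> G" by blast
  fix g assume g: "g \<in> {g \<in> G. Lits M s g}"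
  have "N (Es s) g \<subseteq> {g \<in> G. Lits M s g}"
  proof
    fix h assume h: "h \<in> N (Es s) g"
    hence "Lits M s h = Lits M s g" by (intro Lits_cong) (auto simp: N_def)
    thus "h \<in> {g \<in> G. Lits M s g}" using g h unfolding N_def by blast
  qed
  thus "\<exists>A. small kr A \<and> N A g \<subseteq> {g \<in> G. Lits M s g}" using small_Es[OF s] by blast
qed

lemma bp_borel: "B \<in> kBorel kr ar \<Longrightarrow> M \<in> Xtau ar \<Longrightarrow> BP (S M B)"
proof (induction arbitrary: M rule: kBorel.induct)
  case (basic s) thus ?case using S_basic_open bp_open by blast
next
  case (compl A) thus ?case using S_compl bp_compl by metis
next
  case (union F) thus ?case unfolding S_union by (intro bp_union) blast
next
  case (inter F)
  have "BP (G - S M (F i))" for i using inter bp_compl by blast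
  hence "BP (\<Union>i. G - S M (F i))" by (rule bp_union)
  hence "BP (G - (\<Union>i. G - S M (F i)))" by (rule bp_compl)
  thus ?case unfolding S_inter[OF inter.prems] .
qed

end

definition TT :: "('s, 'k, 'k) fm" where "TT = fm.Ex {undefined} (Eq undefined undefined)"
definition And :: "('s, 'k, 'v) fm \<Rightarrow> ('s, 'k, 'v) fm \<Rightarrow> ('s, 'k, 'v) fm" where
  "And a b = Conj (\<lambda>i. if i = undefined then a else b)"
definition Imp :: "('s, 'k, 'v) fm \<Rightarrow> ('s, 'k, 'v) fm \<Rightarrow> ('s, 'k, 'v) fm" where
  "Imp a b = Neg (And a (Neg b))"
definition All :: "'v set \<Rightarrow> ('s, 'k, 'v) fm \<Rightarrow> ('s, 'k, 'v) fm" where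
  "All V a = Neg (fm.Ex V (Neg a))"
definition litfm :: "'s \<times> 'v list \<Rightarrow> bool \<Rightarrow> ('s, 'k, 'v) fm" where
  "litfm p b = (if b then Rel (fst p) (snd p) else Neg (Rel (fst p) (snd p)))"

lemma sat_All: "sat M e (All V a) \<longleftrightarrow> (\<forall>e'. (\<forall>v. v \<notin> V \<longrightarrow> e' v = e v) \<longrightarrow> sat M e' a)"
  unfolding All_def by auto

lemma fv_All: "fv (All V a) = fv a - V" unfolding All_def by simp
lemma wf_All: "wf kr ar F (All V a) \<longleftrightarrow> small kr V \<and> wf kr ar F a" unfolding All_def by simp

lemma fv_And: "fv (And a b) \<subseteq> fv a \<union> fv b" unfolding And_def by (auto split: if_splits)
lemma wf_And: "wf kr ar F a \<Longrightarrow> wf kr ar F b \<Longrightarrow> wf kr ar F (And a b)" unfolding And_def by simp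
lemma fv_Imp: "fv (Imp a b) \<subseteq> fv a \<union> fv b" unfolding Imp_def using fv_And by fastforce
lemma wf_Imp: "wf kr ar F a \<Longrightarrow> wf kr ar F b \<Longrightarrow> wf kr ar F (Imp a b)" unfolding Imp_def by (simp add: wf_And)

context kap3 begin

lemma ex_other: "\<exists>k1::'k. k1 \<noteq> k0"
proof (rule ccontr)
  assume "\<not> (\<exists>k1::'k. k1 \<noteq> k0)"
  hence "(UNIV :: 'k set) = {k0}" by auto
  hence "finite (UNIV :: 'k set)" by (metis finite.emptyI finite.insertI)
  thus False using inf_k by contradiction
qed

lemma sat_And: "sat M (e :: 'v \<Rightarrow> 'k) (And a b) \<longleftrightarrow> sat M e a \<and> sat M e b"
proof -
  obtain k1 :: 'k where "k1 \<noteq> undefined" using ex_other by blast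
  hence "(\<forall>i::'k. sat M e (if i = undefined then a else b)) \<longleftrightarrow> sat M e a \<and> sat M e b"
    by (metis (full_types))
  thus ?thesis unfolding And_def by simp
qed

lemma sat_Imp: "sat M (e :: 'v \<Rightarrow> 'k) (Imp a b) \<longleftrightarrow> (sat M e a \<longrightarrow> sat M e b)"
  unfolding Imp_def by (simp add: sat_And)

lemma sat_TT: "sat M e (TT :: ('s, 'k, 'k) fm)"
  unfolding TT_def by auto

lemma fv_TT: "fv (TT :: ('s, 'k, 'k) fm) = {}"
  unfolding TT_def by simp

lemma wf_TT: "wf kr ar F (TT :: ('s, 'k, 'k) fm)"
  unfolding TT_def using small_finite[of "{undefined :: 'k}"] by simp

lemma ex_kseq_ran: assumes "small kr D" shows "\<exists>d \<in> kseqs kr. ran d = (D :: 'k set)"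
proof -
  obtain a f where f: "bij_betw f (underS kr a) D" using small_enum[OF assms] by blast
  define d where "d = (\<lambda>i. if i \<in> underS kr a then Some (f i) else None)"
  have "dom d = underS kr a" unfolding d_def dom_def by auto
  hence "d \<in> kseqs kr" unfolding kseqs_def by blast
  moreover have "ran d = f ` underS kr a" unfolding d_def ran_def by auto
  hence "ran d = D" using f unfolding bij_betw_def by simp
  ultimately show ?thesis by blast
qed

lemma small_ran: "d \<in> kseqs kr \<Longrightarrow> small kr (ran (d :: 'k \<rightharpoonup> 'k))"
proof -
  assume "d \<in> kseqs kr"
  then obtain a where a: "dom d = underS kr a" unfolding kseqs_def by blast
  have "ran d = (\<lambda>i. the (d i)) ` dom d" unfolding ran_def dom_def by force
  thus ?thesis using a small_image[OF small_underS] by simp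
qed

definition dseq :: "'k set \<Rightarrow> ('k \<rightharpoonup> 'k)" where
  "dseq D = (SOME d. d \<in> kseqs kr \<and> ran d = D)"

lemma dseq: "small kr D \<Longrightarrow> dseq D \<in> kseqs kr \<and> ran (dseq D) = D"
  unfolding dseq_def using ex_kseq_ran someI_ex by (metis (mono_tags, lifting))

definition orbQ :: "('k \<rightharpoonup> 'k) \<Rightarrow> ('k \<rightharpoonup> 'k) set" where
  "orbQ d = {map_option g \<circ> d | g. g \<in> G}"

definition Real :: "'k set \<Rightarrow> ('s, 'k, 'k) fm" where
  "Real D = Orb (orbQ (dseq D)) (dseq D)"

lemma fv_Real: "small kr D \<Longrightarrow> fv (Real D) = D"
  unfolding Real_def using dseq by simp

lemma wf_Real: "small kr D \<Longrightarrow> wf kr ar (orbits kr G) (Real D)"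
proof -
  assume D: "small kr D"
  have "orbQ (dseq D) \<in> orbits kr G" unfolding orbits_def orbQ_def using dseq[OF D] by blast
  moreover have "map_option id \<circ> dseq D \<in> orbQ (dseq D)" unfolding orbQ_def using sub_id[OF subG] by blast
  moreover have "dom (dseq D) = dom (map_option id \<circ> dseq D)" by (simp add: option.map_id)
  ultimately have "\<exists>a\<in>orbQ (dseq D). dom (dseq D) = dom a" by blast
  thus ?thesis using \<open>orbQ (dseq D) \<in> orbits kr G\<close> unfolding Real_def by simp
qed

lemma sat_Real: assumes "small kr D" shows "sat M e (Real D) \<longleftrightarrow> realz D e"
proof -
  let ?d = "dseq D"
  have r: "ran ?d = D" using dseq[OF assms] by blast
  have eq: "map_option e \<circ> ?d = map_option g \<circ> ?d \<longleftrightarrow> (\<forall>x\<in>D. g x = e x)" for g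
  proof
    assume h: "map_option e \<circ> ?d = map_option g \<circ> ?d"
    show "\<forall>x\<in>D. g x = e x"
    proof
      fix x assume "x \<in> D"
      then obtain i where "?d i = Some x" using r unfolding ran_def by blast
      moreover have "map_option e (?d i) = map_option g (?d i)" using h by (metis comp_apply)
      ultimately show "g x = e x" by simp
    qed
  next
    assume h: "\<forall>x\<in>D. g x = e x"
    show "map_option e \<circ> ?d = map_option g \<circ> ?d"
    proof
      fix i show "(map_option e \<circ> ?d) i = (map_option g \<circ> ?d) i"
      proof (cases "?d i")
        case (Some x)
        hence "x \<in> D" using r unfolding ran_def by blast
        thus ?thesis using Some h by simp
      qed simp
    qed
  qed
  show ?thesis unfolding Real_def sat.simps orbQ_def realz_def
    using eq by blast
qed

lemma surj_small: assumes "small kr A" shows "\<exists>f :: 'k \<Rightarrow> 'a. A \<subseteq> range f"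
proof (cases "A = {}")
  case True thus ?thesis by blast
next
  case False
  have "|A| \<le>o |UNIV :: 'k set|" using assms unfolding small_iff by (rule ordLess_imp_ordLeq)
  hence "\<exists>f :: 'k \<Rightarrow> 'a. f ` UNIV = A" by (rule card_of_ordLeq2[OF False, THEN iffD2])
  thus ?thesis by blast
qed

end

context kap3 begin

definition good :: "('s \<Rightarrow> nat) \<Rightarrow> ('s, 'k) tstruct set \<Rightarrow> ('k set \<Rightarrow> ('s, 'k, 'k) fm) \<Rightarrow> bool" where
  "good ar B \<Phi> \<longleftrightarrow> (\<forall>D. small kr D \<longrightarrow> wf kr ar (orbits kr G) (\<Phi> D) \<and> fv (\<Phi> D) \<subseteq> D) \<and>
     (\<forall>M\<in>Xtau ar. \<forall>D e. small kr D \<longrightarrow> realz D e \<longrightarrow> (sat M e (\<Phi> D) \<longleftrightarrow> comeager (N D e) (S M B)))"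

definition Lfm :: "('s \<times> 'k list \<rightharpoonup> bool) \<Rightarrow> ('k \<Rightarrow> 's \<times> 'k list) \<Rightarrow> ('s, 'k, 'k) fm" where
  "Lfm s f = Conj (\<lambda>i. if f i \<in> dom s then litfm (f i) (the (s (f i))) else TT)"

lemma sat_Lfm: assumes "dom s \<subseteq> range f" shows "sat M e (Lfm s f) \<longleftrightarrow> Lits M s e"
proof
  assume h: "sat M e (Lfm s f)"
  show "Lits M s e" unfolding Lits_def
  proof (intro allI impI)
    fix R xs b assume sb: "s (R, xs) = Some b"
    then obtain i where i: "f i = (R, xs)" using assms by (metis domI rangeE subsetD)
    have "sat M e (if f i \<in> dom s then litfm (f i) (the (s (f i))) else TT)" using h unfolding Lfm_def by simp
    hence "sat M e (litfm (f i) (the (s (f i))))" using i sb by (simp add: domI)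
    hence "sat M e (litfm (R, xs) b)" unfolding i sb by simp
    thus "M R (map e xs) = b" by (cases b) (auto simp: litfm_def)
  qed
next
  assume h: "Lits M s e"
  have "sat M e (if f i \<in> dom s then litfm (f i) (the (s (f i))) else TT)" for i
  proof (cases "f i \<in> dom s")
    case True
    then obtain R xs b where fi: "f i = (R, xs)" "s (R, xs) = Some b" by (cases "f i") auto
    hence "M R (map e xs) = b" using h unfolding Lits_def by blast
    thus ?thesis using fi by (cases b) (auto simp: litfm_def)
  qed (simp add: sat_TT)
  thus "sat M e (Lfm s f)" unfolding Lfm_def by simp
qed

lemma fv_Lfm: "fv (Lfm s f) \<subseteq> Es s"
proof -
  have "fv (if f i \<in> dom s then litfm (f i) (the (s (f i))) else TT) \<subseteq> Es s" for i
  proof (cases "f i \<in> dom s")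
    case True thus ?thesis unfolding Es_def litfm_def by auto
  qed (simp add: fv_TT)
  thus ?thesis unfolding Lfm_def by auto
qed

lemma wf_Lfm: "is_basic_cond kr ar s \<Longrightarrow> wf kr ar F (Lfm s f)"
proof -
  assume s: "is_basic_cond kr ar s"
  have "wf kr ar F (if f i \<in> dom s then litfm (f i) (the (s (f i))) else TT)" for i
  proof (cases "f i \<in> dom s")
    case True
    then obtain R xs where "f i = (R, xs)" "(R, xs) \<in> dom s" by (cases "f i") auto
    thus ?thesis using s unfolding is_basic_cond_def litfm_def by auto
  qed (simp add: wf_TT)
  thus ?thesis unfolding Lfm_def by simp
qed

lemma N_sub: "(\<And>x. x \<in> D \<Longrightarrow> e' x = e x) \<Longrightarrow> D \<subseteq> D' \<Longrightarrow> N D' e' \<subseteq> N D e"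
  unfolding N_def by auto

lemma N_sub_G: "N D e \<subseteq> G" unfolding N_def by blast

lemma comeager_N_G: "comeager G C \<Longrightarrow> comeager (N D e) C"
  using comeager_mono N_sub_G by blast

lemma comeager_empty:
  assumes "small kr D" "realz D e" "comeager (N D e) {}" shows False
  using baire_ne[OF assms] by blast

lemma good_basic:
  fixes s :: "'s \<times> 'k list \<rightharpoonup> bool" and ar :: "'s \<Rightarrow> nat"
  assumes s: "is_basic_cond kr ar s"
  shows "\<exists>\<Phi>. good ar (basic_open ar s) \<Phi>"
proof -
  let ?E = "Es s"
  have sE: "small kr ?E" using small_Es[OF s] .
  obtain f :: "'k \<Rightarrow> 's \<times> 'k list" where f: "dom s \<subseteq> range f"
    using surj_small s unfolding is_basic_cond_def by blast
  define \<Phi> where "\<Phi> = (\<lambda>D. All (?E - D) (Imp (Real (D \<union> ?E)) (Lfm s f)))"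
  have syn: "wf kr ar (orbits kr G) (\<Phi> D) \<and> fv (\<Phi> D) \<subseteq> D" if D: "small kr D" for D
  proof
    have sDE: "small kr (D \<union> ?E)" using small_Un[OF D sE] .
    show "wf kr ar (orbits kr G) (\<Phi> D)" unfolding \<Phi>_def wf_All
      by (intro conjI wf_Imp wf_Real[OF sDE] wf_Lfm[OF s] small_subset[OF sE]) auto
    have "fv (Imp (Real (D \<union> ?E)) (Lfm s f)) \<subseteq> D \<union> ?E"
      using fv_Imp[of "Real (D \<union> ?E)" "Lfm s f"] fv_Real[OF sDE] fv_Lfm[of s f] by blast
    thus "fv (\<Phi> D) \<subseteq> D" unfolding \<Phi>_def fv_All by blast
  qed
  have sem: "sat M e (\<Phi> D) \<longleftrightarrow> comeager (N D e) (S M (basic_open ar s))"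
    if M: "M \<in> Xtau ar" and D: "small kr D" and re: "realz D e" for M D e
  proof -
    have sDE: "small kr (D \<union> ?E)" using small_Un[OF D sE] .
    have "sat M e (\<Phi> D) \<longleftrightarrow> (\<forall>e'. (\<forall>v. v \<notin> ?E - D \<longrightarrow> e' v = e v) \<longrightarrow> realz (D \<union> ?E) e' \<longrightarrow> Lits M s e')"
      by (simp only: \<Phi>_def sat_All sat_Imp sat_Real[OF sDE] sat_Lfm[OF f])
    also have "\<dots> \<longleftrightarrow> comeager (N D e) (S M (basic_open ar s))"
    proof
      assume H: "\<forall>e'. (\<forall>v. v \<notin> ?E - D \<longrightarrow> e' v = e v) \<longrightarrow> realz (D \<union> ?E) e' \<longrightarrow> Lits M s e'"
      have "N D e \<subseteq> S M (basic_open ar s)"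
      proof
        fix g assume g: "g \<in> N D e"
        hence gG: "g \<in> G" and gD: "\<forall>x\<in>D. g x = e x" unfolding N_def by auto
        define e' where "e' = (\<lambda>v. if v \<in> ?E - D then g v else e v)"
        have "realz (D \<union> ?E) e'" unfolding realz_def e'_def using gG gD by auto
        hence "Lits M s e'" using H unfolding e'_def by auto
        moreover have "Lits M s e' = Lits M s g" by (rule Lits_cong) (use gD in \<open>auto simp: e'_def\<close>)
        ultimately show "g \<in> S M (basic_open ar s)" unfolding S_basic[OF M] using gG by simp
      qed
      thus "comeager (N D e) (S M (basic_open ar s))" by (rule comeager_sub)
    next
      assume C: "comeager (N D e) (S M (basic_open ar s))"
      show "\<forall>e'. (\<forall>v. v \<notin> ?E - D \<longrightarrow> e' v = e v) \<longrightarrow> realz (D \<union> ?E) e' \<longrightarrow> Lits M s e'"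
      proof (intro allI impI)
        fix e' assume e': "\<forall>v. v \<notin> ?E - D \<longrightarrow> e' v = e v" and re': "realz (D \<union> ?E) e'"
        have "N (D \<union> ?E) e' \<subseteq> N D e" by (rule N_sub) (use e' in auto)
        hence "comeager (N (D \<union> ?E) e') (S M (basic_open ar s))" using C comeager_mono by blast
        then obtain k where k: "k \<in> N (D \<union> ?E) e'" "k \<in> S M (basic_open ar s)"
          using baire_ne[OF sDE re'] by blast
        have "Lits M s k" using k(2) unfolding S_basic[OF M] by simp
        moreover have "Lits M s k = Lits M s e'" by (rule Lits_cong) (use k(1) in \<open>auto simp: N_def\<close>)
        ultimately show "Lits M s e'" by simp
      qed
    qed
    finally show ?thesis .
  qed
  have "good ar (basic_open ar s) \<Phi>" unfolding good_def
  proof (intro conjI allI impI ballI)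
    fix D :: "'k set" assume "small kr D" thus "wf kr ar (orbits kr G) (\<Phi> D)" "fv (\<Phi> D) \<subseteq> D" using syn by auto
  next
    fix M :: "('s, 'k) tstruct" and D :: "'k set" and e assume "M \<in> Xtau ar" "small kr D" "realz D e"
    thus "sat M e (\<Phi> D) = comeager (N D e) (S M (basic_open ar s))" by (rule sem)
  qed
  thus ?thesis by blast
qed

end

context kap3 begin

lemma ex_ds: "\<exists>ds :: 'k \<Rightarrow> ('k \<rightharpoonup> 'k). range ds = kseqs kr"
proof -
  have "kseqs kr \<noteq> ({} :: ('k \<rightharpoonup> 'k) set)" using ex_kseq_ran[OF small_finite[of "{} :: 'k set"]] by blast
  thus ?thesis using card_of_ordLeq2[THEN iffD2, OF _ kseqs_le] by blast
qed

lemma good_compl: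
  fixes ar :: "'s \<Rightarrow> nat" and B :: "('s, 'k) tstruct set" and \<Phi> :: "'k set \<Rightarrow> ('s, 'k, 'k) fm"
  assumes B: "B \<in> kBorel kr ar" and g: "good ar B \<Phi>"
  shows "\<exists>\<Phi>'. good ar (Xtau ar - B) \<Phi>'"
proof -
  obtain ds :: "'k \<Rightarrow> ('k \<rightharpoonup> 'k)" where ds: "range ds = kseqs kr" using ex_ds by blast
  define R where "R = (\<lambda>i. ran (ds i))"
  have sR: "small kr (R i)" for i unfolding R_def using small_ran ds by blast
  have gsyn: "small kr D \<Longrightarrow> wf kr ar (orbits kr G) (\<Phi> D) \<and> fv (\<Phi> D) \<subseteq> D" for D
    using g unfolding good_def by blast
  have gsem: "M \<in> Xtau ar \<Longrightarrow> small kr D \<Longrightarrow> realz D e \<Longrightarrow> sat M e (\<Phi> D) \<longleftrightarrow> comeager (N D e) (S M B)" for M D e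
    using g unfolding good_def by blast
  define \<Phi>' where "\<Phi>' = (\<lambda>D. Conj (\<lambda>i. All (R i - D) (Imp (Real (D \<union> R i)) (Neg (\<Phi> (D \<union> R i))))))"
  have syn: "wf kr ar (orbits kr G) (\<Phi>' D) \<and> fv (\<Phi>' D) \<subseteq> D" if D: "small kr D" for D
  proof
    have sDR: "small kr (D \<union> R i)" for i using small_Un[OF D sR] .
    have "wf kr ar (orbits kr G) (All (R i - D) (Imp (Real (D \<union> R i)) (Neg (\<Phi> (D \<union> R i)))))" for i
    proof -
      have "wf kr ar (orbits kr G) (Neg (\<Phi> (D \<union> R i)))" using gsyn[OF sDR] by simp
      hence "wf kr ar (orbits kr G) (Imp (Real (D \<union> R i)) (Neg (\<Phi> (D \<union> R i))))"
        by (rule wf_Imp[OF wf_Real[OF sDR]])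
      moreover have "small kr (R i - D)" using small_subset[OF sR[of i]] by blast
      ultimately show ?thesis unfolding wf_All by blast
    qed
    thus "wf kr ar (orbits kr G) (\<Phi>' D)" unfolding \<Phi>'_def by simp
    have "fv (All (R i - D) (Imp (Real (D \<union> R i)) (Neg (\<Phi> (D \<union> R i))))) \<subseteq> D" for i
    proof -
      have "fv (Imp (Real (D \<union> R i)) (Neg (\<Phi> (D \<union> R i)))) \<subseteq> D \<union> R i"
      proof -
        have "fv (Neg (\<Phi> (D \<union> R i))) \<subseteq> D \<union> R i" using gsyn[OF sDR] by simp
        moreover have "fv (Real (D \<union> R i)) = D \<union> R i" using fv_Real[OF sDR] .
        ultimately show ?thesis using fv_Imp[of "Real (D \<union> R i)" "Neg (\<Phi> (D \<union> R i))"] by blast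
      qed
      thus ?thesis unfolding fv_All by blast
    qed
    thus "fv (\<Phi>' D) \<subseteq> D" unfolding \<Phi>'_def by auto
  qed
  have sem: "sat M e (\<Phi>' D) \<longleftrightarrow> comeager (N D e) (S M (Xtau ar - B))"
    if M: "M \<in> Xtau ar" and D: "small kr D" and re: "realz D e" for M D e
  proof -
    have sDR: "small kr (D \<union> R i)" for i using small_Un[OF D sR] .
    have sRe: "sat M e' (Real (D \<union> R i)) \<longleftrightarrow> realz (D \<union> R i) e'" for i e' using sat_Real[OF sDR] .
    have SC: "S M (Xtau ar - B) = G - S M B" using S_compl[OF M] .
    have "sat M e (\<Phi>' D) \<longleftrightarrow> (\<forall>i e'. (\<forall>v. v \<notin> R i - D \<longrightarrow> e' v = e v) \<longrightarrow> realz (D \<union> R i) e' \<longrightarrow> \<not> sat M e' (\<Phi> (D \<union> R i)))"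
      by (simp only: \<Phi>'_def sat.simps sat_All sat_Imp sRe)
    also have "\<dots> \<longleftrightarrow> (\<forall>i e'. (\<forall>v. v \<notin> R i - D \<longrightarrow> e' v = e v) \<longrightarrow> realz (D \<union> R i) e' \<longrightarrow> \<not> comeager (N (D \<union> R i) e') (S M B))"
      using gsem[OF M sDR] by blast
    also have "\<dots> \<longleftrightarrow> comeager (N D e) (G - S M B)"
    proof
      assume H: "\<forall>i e'. (\<forall>v. v \<notin> R i - D \<longrightarrow> e' v = e v) \<longrightarrow> realz (D \<union> R i) e' \<longrightarrow> \<not> comeager (N (D \<union> R i) e') (S M B)"
      show "comeager (N D e) (G - S M B)"
      proof (rule ccontr)
        assume nc: "\<not> comeager (N D e) (G - S M B)"
        obtain Op C where oc: "rel_open kr G Op" "comeager G C" "\<forall>g\<in>G \<inter> C. g \<in> S M B \<longleftrightarrow> g \<in> Op"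
          using bp_borel[OF B M] unfolding BP_def by blast
        have "Op \<inter> N D e \<noteq> {}"
        proof
          assume empty: "Op \<inter> N D e = {}"
          have "comeager (N D e) (C \<inter> N D e)"
            using comeager_Int[OF comeager_N_G[OF oc(2)] comeager_sub[of "N D e" "N D e"]] by simp
          moreover have "C \<inter> N D e \<subseteq> G - S M B" using oc(3) empty N_sub_G by blast
          ultimately show False using nc comeager_mono by blast
        qed
        then obtain h where h: "h \<in> Op" "h \<in> N D e" by blast
        obtain A where A: "small kr A" "N A h \<subseteq> Op" using rel_open_basis[OF oc(1) h(1)] by blast
        obtain d where d: "d \<in> kseqs kr" "ran d = A" using ex_kseq_ran[OF A(1)] by blast
        obtain i where i: "ds i = d" using d(1) ds by (metis rangeE)
        have RA: "R i = A" unfolding R_def using i d by simp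
        have hG: "h \<in> G" and hD: "\<forall>x\<in>D. h x = e x" using h(2) unfolding N_def by auto
        define e' where "e' = (\<lambda>v. if v \<in> A - D then h v else e v)"
        have c1: "\<forall>v. v \<notin> R i - D \<longrightarrow> e' v = e v" unfolding e'_def RA by simp
        have c2: "realz (D \<union> R i) e'" unfolding realz_def RA e'_def using hG hD by auto
        have Nsub: "N (D \<union> R i) e' \<subseteq> Op"
        proof -
          have "N (D \<union> R i) e' \<subseteq> N A h" by (rule N_sub) (auto simp: e'_def RA hD)
          thus ?thesis using A(2) by blast
        qed
        have "comeager (N (D \<union> R i) e') (C \<inter> N (D \<union> R i) e')"
          using comeager_Int[OF comeager_N_G[OF oc(2)] comeager_sub[of "N (D \<union> R i) e'" "N (D \<union> R i) e'"]] by simp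
        moreover have "C \<inter> N (D \<union> R i) e' \<subseteq> S M B" using oc(3) Nsub N_sub_G by blast
        ultimately have "comeager (N (D \<union> R i) e') (S M B)" using comeager_mono by blast
        thus False using H c1 c2 by blast
      qed
    next
      assume C: "comeager (N D e) (G - S M B)"
      show "\<forall>i e'. (\<forall>v. v \<notin> R i - D \<longrightarrow> e' v = e v) \<longrightarrow> realz (D \<union> R i) e' \<longrightarrow> \<not> comeager (N (D \<union> R i) e') (S M B)"
      proof (intro allI impI notI)
        fix i e' assume c1: "\<forall>v. v \<notin> R i - D \<longrightarrow> e' v = e v" and c2: "realz (D \<union> R i) e'"
          and c3: "comeager (N (D \<union> R i) e') (S M B)"
        have "N (D \<union> R i) e' \<subseteq> N D e" by (rule N_sub) (use c1 in auto)
        hence "comeager (N (D \<union> R i) e') (G - S M B)" using C comeager_mono by blast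
        hence "comeager (N (D \<union> R i) e') (S M B \<inter> (G - S M B))" using comeager_Int[OF c3] by blast
        hence "comeager (N (D \<union> R i) e') {}" by simp
        thus False using comeager_empty[OF sDR c2] by blast
      qed
    qed
    finally show ?thesis unfolding SC .
  qed
  have "good ar (Xtau ar - B) \<Phi>'" unfolding good_def
  proof (intro conjI allI impI ballI)
    fix D :: "'k set" assume "small kr D" thus "wf kr ar (orbits kr G) (\<Phi>' D)" "fv (\<Phi>' D) \<subseteq> D" using syn by auto
  next
    fix M :: "('s, 'k) tstruct" and D :: "'k set" and e assume "M \<in> Xtau ar" "small kr D" "realz D e"
    thus "sat M e (\<Phi>' D) = comeager (N D e) (S M (Xtau ar - B))" by (rule sem)
  qed
  thus ?thesis by blast
qed

end

context kap3 begin

lemma S_inter2: "M \<in> Xtau ar \<Longrightarrow> S M (Xtau ar \<inter> (\<Inter>i. F i)) = G \<inter> (\<Inter>i. S M (F i))"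
  unfolding S_def using act_Xtau by blast

lemma good_inter:
  fixes ar :: "'s \<Rightarrow> nat" and F :: "'k \<Rightarrow> ('s, 'k) tstruct set"
  assumes g: "\<And>i. good ar (F i) (\<Phi>s i)"
  shows "good ar (Xtau ar \<inter> (\<Inter>i. F i)) (\<lambda>D. Conj (\<lambda>i. \<Phi>s i D))"
  unfolding good_def
proof (intro conjI allI impI ballI)
  fix D :: "'k set" assume D: "small kr D"
  have "\<forall>D. small kr D \<longrightarrow> wf kr ar (orbits kr G) (\<Phi>s i D) \<and> fv (\<Phi>s i D) \<subseteq> D" for i
    using g[of i] unfolding good_def by (rule conjunct1)
  hence w: "wf kr ar (orbits kr G) (\<Phi>s i D)" and f: "fv (\<Phi>s i D) \<subseteq> D" for i using D by auto
  show "wf kr ar (orbits kr G) (Conj (\<lambda>i. \<Phi>s i D))" using w by simp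
  show "fv (Conj (\<lambda>i. \<Phi>s i D)) \<subseteq> D" using f by (simp add: UN_least)
next
  fix M :: "('s, 'k) tstruct" and D :: "'k set" and e assume M: "M \<in> Xtau ar" and D: "small kr D" and re: "realz D e"
  have H: "\<forall>M\<in>Xtau ar. \<forall>D e. small kr D \<longrightarrow> realz D e \<longrightarrow> (sat M e (\<Phi>s i D) \<longleftrightarrow> comeager (N D e) (S M (F i)))" for i
    using g[of i] unfolding good_def by (rule conjunct2)
  have sem: "sat M e (\<Phi>s i D) \<longleftrightarrow> comeager (N D e) (S M (F i))" for i
    using H[of i, rule_format, OF M D re] .
  have "sat M e (Conj (\<lambda>i. \<Phi>s i D)) \<longleftrightarrow> (\<forall>i. comeager (N D e) (S M (F i)))" by (simp only: sat.simps sem)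
  also have "\<dots> \<longleftrightarrow> comeager (N D e) (S M (Xtau ar \<inter> (\<Inter>i. F i)))"
  proof
    assume "\<forall>i. comeager (N D e) (S M (F i))"
    hence "comeager (N D e) (\<Inter>i. S M (F i))" by (intro comeager_INT) simp
    moreover have "(\<Inter>i. S M (F i)) \<subseteq> S M (Xtau ar \<inter> (\<Inter>i. F i))"
    proof
      fix g assume g: "g \<in> (\<Inter>i. S M (F i))"
      hence "g \<in> S M (F undefined)" by blast
      hence "g \<in> G" unfolding S_def by blast
      thus "g \<in> S M (Xtau ar \<inter> (\<Inter>i. F i))" unfolding S_inter2[OF M] using g by blast
    qed
    ultimately show "comeager (N D e) (S M (Xtau ar \<inter> (\<Inter>i. F i)))" by (rule comeager_mono[OF _ order_refl])
  next
    assume "comeager (N D e) (S M (Xtau ar \<inter> (\<Inter>i. F i)))"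
    moreover have "S M (Xtau ar \<inter> (\<Inter>i. F i)) \<subseteq> S M (F i)" for i unfolding S_inter2[OF M] by blast
    ultimately show "\<forall>i. comeager (N D e) (S M (F i))" using comeager_mono[OF _ order_refl] by blast
  qed
  finally show "sat M e (Conj (\<lambda>i. \<Phi>s i D)) = comeager (N D e) (S M (Xtau ar \<inter> (\<Inter>i. F i)))" .
qed

lemma good_inter_ex:
  fixes ar :: "'s \<Rightarrow> nat" and F :: "'k \<Rightarrow> ('s, 'k) tstruct set"
  assumes g: "\<And>i. \<exists>\<Phi>. good ar (F i) \<Phi>"
  shows "\<exists>\<Phi>. good ar (Xtau ar \<inter> (\<Inter>i. F i)) \<Phi>"
proof -
  have "\<forall>i. \<exists>\<Phi> :: 'k set \<Rightarrow> ('s, 'k, 'k) fm. good ar (F i) \<Phi>" using g by blast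
  from choice[OF this] obtain \<Phi>s :: "'k \<Rightarrow> 'k set \<Rightarrow> ('s, 'k, 'k) fm" where "\<forall>i. good ar (F i) (\<Phi>s i)" by blast
  thus ?thesis using good_inter by blast
qed

lemma good_all:
  fixes ar :: "'s \<Rightarrow> nat"
  shows "B \<in> kBorel kr ar \<Longrightarrow> \<exists>\<Phi>. good ar B \<Phi>"
proof (induction rule: kBorel.induct)
  case (basic s) thus ?case by (rule good_basic)
next
  case (compl A)
  then obtain \<Phi> where "good ar A \<Phi>" by blast
  thus ?case using good_compl[OF compl.hyps(1)] by blast
next
  case (union F)
  have FX: "F i \<subseteq> Xtau ar" for i using kB_sub[OF union.hyps] .
  have eq: "(\<Union>i. F i) = Xtau ar - (Xtau ar \<inter> (\<Inter>i. Xtau ar - F i))" using FX by blast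
  have cB: "Xtau ar - F i \<in> kBorel kr ar" for i using kBorel.compl[OF union.hyps] .
  have cg: "\<exists>\<Phi>. good ar (Xtau ar - F i) \<Phi>" for i
  proof -
    obtain \<Phi> where "good ar (F i) \<Phi>" using union.IH by blast
    thus ?thesis using good_compl[OF union.hyps] by blast
  qed
  have "\<exists>\<Phi>. good ar (Xtau ar \<inter> (\<Inter>i. Xtau ar - F i)) \<Phi>" by (rule good_inter_ex[OF cg])
  then obtain \<Psi> where "good ar (Xtau ar \<inter> (\<Inter>i. Xtau ar - F i)) \<Psi>" by blast
  moreover have "Xtau ar \<inter> (\<Inter>i. Xtau ar - F i) \<in> kBorel kr ar" using kBorel.inter[OF cB] .
  ultimately have "\<exists>\<Phi>. good ar (Xtau ar - (Xtau ar \<inter> (\<Inter>i. Xtau ar - F i))) \<Phi>" using good_compl by blast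
  thus ?case unfolding eq .
next
  case (inter F) thus ?case using good_inter_ex by blast
qed

lemma dir2:
  fixes ar :: "'s \<Rightarrow> nat" and A :: "('s, 'k) tstruct set"
  assumes AB: "A \<in> kBorel kr ar" and inv: "invariant G A" and AX: "A \<subseteq> Xtau ar"
  shows "definable kr ar (orbits kr G) A"
proof -
  obtain \<Phi> where g: "good ar A \<Phi>" using good_all[OF AB] by blast
  have s0: "small kr ({} :: 'k set)" by (rule small_finite) simp
  have syn: "wf kr ar (orbits kr G) (\<Phi> {}) \<and> fv (\<Phi> {}) \<subseteq> {}" using g s0 unfolding good_def by blast
  have sent: "sentence kr ar (orbits kr G) (\<Phi> {})" unfolding sentence_def using syn by blast
  have rz: "realz {} e" for e unfolding realz_def using sub_id[OF subG] by blast
  have NG: "N {} e = G" for e unfolding N_def by simp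
  have H: "\<forall>M\<in>Xtau ar. \<forall>D e. small kr D \<longrightarrow> realz D e \<longrightarrow> (sat M e (\<Phi> D) \<longleftrightarrow> comeager (N D e) (S M A))"
    using g unfolding good_def by (rule conjunct2)
  have sem: "M \<in> Xtau ar \<Longrightarrow> sat M e (\<Phi> {}) \<longleftrightarrow> comeager G (S M A)" for M e
    using H[rule_format, OF _ s0 rz, of M e] unfolding NG by blast
  have "M \<in> A \<longleftrightarrow> models M (\<Phi> {})" if M: "M \<in> Xtau ar" for M
  proof
    assume MA: "M \<in> A"
    have "S M A = G"
    proof -
      have "act (inv g) M \<in> A" if gG: "g \<in> G" for g
      proof -
        have "inv g \<in> G" using sub_inv[OF subG gG] .
        hence "act (inv g) ` A = A" using inv unfolding invariant_def by blast
        thus ?thesis using MA by blast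
      qed
      thus ?thesis unfolding S_def by blast
    qed
    hence "comeager G (S M A)" using comeager_sub by simp
    thus "models M (\<Phi> {})" unfolding models_def using sem[OF M] by blast
  next
    assume "models M (\<Phi> {})"
    hence C: "comeager G (S M A)" unfolding models_def using sem[OF M] by blast
    show "M \<in> A"
    proof (rule ccontr)
      assume MA: "M \<notin> A"
      have "S M A = {}"
      proof -
        have "act (inv g) M \<notin> A" if gG: "g \<in> G" for g
        proof
          assume h: "act (inv g) M \<in> A"
          have b: "bij g" using sub_bij[OF subG gG] .
          have "act g ` A = A" using inv gG unfolding invariant_def by blast
          moreover have "M = act g (act (inv g) M)" by (simp add: act_inv_cancel[OF b])
          ultimately show False using h MA by blast
        qed
        thus ?thesis unfolding S_def by blast
      qed
      hence "comeager (N {} id) {}" using C NG by simp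
      thus False using comeager_empty[OF s0 rz] by blast
    qed
  qed
  thus ?thesis unfolding definable_def using sent by blast
qed

end

theorem proposition25:
  fixes kr :: "'k rel" and ar :: "'s \<Rightarrow> nat" and G :: "('k \<Rightarrow> 'k) set"
  assumes "card_order kr"
    and "(natLeq, kr) \<in> ordLess"
    and "(card_of (kseqs kr :: ('k \<rightharpoonup> 'k) set), kr) \<in> ordIso"
    and "(card_of (UNIV :: 's set), kr) \<in> ordLeq"
    and "subgroup_Sk G" and "closed_Sk kr G" and "kappa_Baire kr G"
    and "A \<subseteq> Xtau ar"
  shows "(A \<in> kBorel kr ar \<and> invariant G A) \<longleftrightarrow> definable kr ar (orbits kr G) A"
proof -
  interpret K: kap3 kr G
    by (unfold_locales) (use assms in auto)
  show ?thesis
  proof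
    assume "A \<in> kBorel kr ar \<and> invariant G A"
    thus "definable kr ar (orbits kr G) A" using K.dir2[OF _ _ assms(8)] by blast
  next
    assume "definable kr ar (orbits kr G) A"
    thus "A \<in> kBorel kr ar \<and> invariant G A" using K.dir1[OF assms(5) _ assms(8)] by blast
  qed
qed

end
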